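(* Let $0<p,r,p_1,r_1,q\leqslant\infty$ and $0<\alpha<\infty$. Suppose that for all $k\in\mathbb Z$ and all $u$, $f$, $$\|D^\alpha\Box_kW(t)u\|_{L_x^pL_t^r}\lesssim\|\Box_ku\|_{L^q},\qquad \|D^\alpha\Box_k\mathscr Af\|_{L_x^pL_t^r}\lesssim\|\Box_kf\|_{L_x^{p_1}L_t^{r_1}}.$$ Then for all $j,k\in\mathbb Z$, $$\|D^\alpha\Box_{j,k}W(t)u\|_{L_x^pL_t^r}\lesssim 2^{j\delta}\|\Box_{j,k}u\|_{L^q},\qquad \|D^\alpha\Box_{j,k}\mathscr Af\|_{L_x^pL_t^r}\lesssim 2^{j\tau}\|\Box_{j,k}f\|_{L_x^{p_1}L_t^{r_1}},$$ where $\delta=\alpha-4/r-1/p+1/q$ and $\tau=\alpha-4-4/r-1/p+4/r_1+1/p_1$.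
   Context: Functions are on $\mathbb R$ in $x$; $t\in\mathbb R$. $D^\alpha f=\mathcal F^{-1}|\xi|^\alpha\hat f$, $W(t)=\mathcal F^{-1}e^{it\xi^4}\mathcal F$, $\mathscr Af(t)=\int_0^tW(t-s)f(s)\,ds$. Let $\sigma$ be a smooth cut-off function adapted to $[-1/2,1/2]$, vanishing outside $[-3/4,3/4]$, with $\sum_{k\in\mathbb Z}\sigma(\xi-k)\equiv1$; $\Box_{j,k}=\mathcal F^{-1}\sigma(2^{-j}\cdot-k)\mathcal F$ (in $x$) and $\Box_k=\Box_{0,k}$. Mixed norm: $\|u\|_{L^a_xL^b_t}=\big\|\,\|u(t,x)\|_{L^b_t}\big\|_{L^a_x}$. Implicit constants are independent of $j,k,u,f$. *)

theory Defs
  imports "HOL-Analysis.Analysis"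
begin

definition schwartz1 :: "(real \<Rightarrow> complex) \<Rightarrow> bool" where
  "schwartz1 u \<longleftrightarrow> (\<exists>D::nat \<Rightarrow> real \<Rightarrow> complex. D 0 = u \<and>
     (\<forall>n x. (D n has_vector_derivative D (Suc n) x) (at x)) \<and>
     (\<forall>m n. bounded (range (\<lambda>x. ((1 + \<bar>x\<bar>) ^ m) *\<^sub>R D n x))))"

text \<open>Schwartz functions of (t,x) in the plane, written as curried functions f t x;
  D a b is the partial derivative of order a in t and b in x.\<close>
definition schwartz2 :: "(real \<Rightarrow> real \<Rightarrow> complex) \<Rightarrow> bool" where
  "schwartz2 f \<longleftrightarrow> (\<exists>D::nat \<Rightarrow> nat \<Rightarrow> real \<Rightarrow> real \<Rightarrow> complex. D 0 0 = f \<and>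
     (\<forall>a b t x. ((\<lambda>s. D a b s x) has_vector_derivative D (Suc a) b t x) (at t)) \<and>
     (\<forall>a b t x. ((\<lambda>y. D a b t y) has_vector_derivative D a (Suc b) t x) (at x)) \<and>
     (\<forall>m a b. bounded (range (\<lambda>(t, x). ((1 + \<bar>t\<bar> + \<bar>x\<bar>) ^ m) *\<^sub>R D a b t x))))"

definition fourier :: "(real \<Rightarrow> complex) \<Rightarrow> real \<Rightarrow> complex" where
  "fourier u \<xi> = (LINT x|lborel. cis (- (x * \<xi>)) * u x)"

definition inv_fourier :: "(real \<Rightarrow> complex) \<Rightarrow> real \<Rightarrow> complex" where
  "inv_fourier g x = complex_of_real (1 / (2 * pi)) * (LINT \<xi>|lborel. cis (x * \<xi>) * g \<xi>)"

text \<open>Fourier multiplier of \<open>\<box>\<^sub>j\<^sub>,\<^sub>k\<close>: \<open>\<sigma>(2^{-j}\<xi> - k)\<close>.\<close>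
definition boxsym :: "(real \<Rightarrow> real) \<Rightarrow> int \<Rightarrow> int \<Rightarrow> real \<Rightarrow> real" where
  "boxsym \<sigma> j k \<xi> = \<sigma> (2 powr (- real_of_int j) * \<xi> - real_of_int k)"

definition box :: "(real \<Rightarrow> real) \<Rightarrow> int \<Rightarrow> int \<Rightarrow> (real \<Rightarrow> complex) \<Rightarrow> real \<Rightarrow> complex" where
  "box \<sigma> j k u = inv_fourier (\<lambda>\<xi>. complex_of_real (boxsym \<sigma> j k \<xi>) * fourier u \<xi>)"

text \<open>\<open>(D^\<alpha> \<box>\<^sub>j\<^sub>,\<^sub>k W(t) u)(x)\<close>, as a function of t and x.\<close>
definition DboxW :: "real \<Rightarrow> (real \<Rightarrow> real) \<Rightarrow> int \<Rightarrow> int \<Rightarrow> (real \<Rightarrow> complex)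
    \<Rightarrow> real \<Rightarrow> real \<Rightarrow> complex" where
  "DboxW \<alpha> \<sigma> j k u t = inv_fourier (\<lambda>\<xi>. complex_of_real (\<bar>\<xi>\<bar> powr \<alpha> * boxsym \<sigma> j k \<xi>)
       * cis (t * \<xi> ^ 4) * fourier u \<xi>)"

text \<open>\<open>(D^\<alpha> \<box>\<^sub>j\<^sub>,\<^sub>k \<A>f)(t,x)\<close> with \<open>\<A>f(t) = \<integral>\<^sub>0\<^sup>t W(t-s) f(s) ds\<close>
  (oriented integral), f given as f s x.\<close>
definition DboxA :: "real \<Rightarrow> (real \<Rightarrow> real) \<Rightarrow> int \<Rightarrow> int \<Rightarrow> (real \<Rightarrow> real \<Rightarrow> complex)
    \<Rightarrow> real \<Rightarrow> real \<Rightarrow> complex" where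
  "DboxA \<alpha> \<sigma> j k f t = inv_fourier (\<lambda>\<xi>. complex_of_real (\<bar>\<xi>\<bar> powr \<alpha> * boxsym \<sigma> j k \<xi>)
       * (LBINT s=0..t. cis ((t - s) * \<xi> ^ 4) * fourier (f s) \<xi>))"

definition epow :: "ennreal \<Rightarrow> real \<Rightarrow> ennreal" where
  "epow x a = (if x = top then top else ennreal (enn2real x powr a))"

definition Lnorm :: "ennreal \<Rightarrow> (real \<Rightarrow> ennreal) \<Rightarrow> ennreal" where
  "Lnorm p g = (if p = top then Inf {c. AE x in lborel. g x \<le> c}
     else epow (\<integral>\<^sup>+ x. epow (g x) (enn2real p) \<partial>lborel) (1 / enn2real p))"

definition Lq :: "ennreal \<Rightarrow> (real \<Rightarrow> complex) \<Rightarrow> ennreal" where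
  "Lq q u = Lnorm q (\<lambda>x. ennreal (norm (u x)))"

text \<open>Mixed norm \<open>\<parallel>F\<parallel>_{L^p_x L^r_t}\<close> of F given as F t x.\<close>
definition mixnorm :: "ennreal \<Rightarrow> ennreal \<Rightarrow> (real \<Rightarrow> real \<Rightarrow> complex) \<Rightarrow> ennreal" where
  "mixnorm p r F = Lnorm p (\<lambda>x. Lnorm r (\<lambda>t. ennreal (norm (F t x))))"

text \<open>Reciprocal of an exponent, with \<open>1/\<infinity> = 0\<close>.\<close>
definition rcp :: "ennreal \<Rightarrow> real" where
  "rcp p = enn2real (inverse p)"

end

theory Submission
  imports Defs
begin

lemma AE_scale:
  fixes c :: real
  assumes c: "c \<noteq> 0" and ae: "AE x in lborel. P x"
  shows "AE x in lborel. P (c * x)"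
proof -
  from ae obtain N where N: "{x \<in> space lborel. \<not> P x} \<subseteq> N" "emeasure lborel N = 0" "N \<in> sets lborel"
    by (rule AE_E)
  let ?f = "\<lambda>x::real. c * x"
  have Nb: "N \<in> sets borel" using N(3) by simp
  have fm: "?f \<in> borel \<rightarrow>\<^sub>M borel" by simp
  have pre: "?f -` N \<in> sets borel" using measurable_sets[OF fm Nb] by simp
  have "emeasure lborel N = emeasure (density (distr lborel borel (\<lambda>x. 0 + c * x)) (\<lambda>_. ennreal (abs c))) N"
    using lborel_real_affine[OF c, of 0] by simp
  also have "\<dots> = ennreal (abs c) * emeasure (distr lborel borel ?f) N"
    using Nb by (simp add: emeasure_density nn_integral_cmult_indicator)
  also have "\<dots> = ennreal (abs c) * emeasure lborel (?f -` N)"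
    using Nb fm by (simp add: emeasure_distr)
  finally have "emeasure lborel (?f -` N) = 0" using N(2) c by simp
  moreover have "?f -` N \<in> sets lborel" using pre by simp
  moreover have "{x \<in> space lborel. \<not> P (c * x)} \<subseteq> ?f -` N" using N(1) by auto
  ultimately show ?thesis by (intro AE_I) auto
qed

lemma nn_scale_le:
  fixes c :: real and f :: "real \<Rightarrow> ennreal"
  assumes c: "c \<noteq> 0"
  shows "(\<integral>\<^sup>+x. f x \<partial>lborel) \<le> ennreal \<bar>c\<bar> * (\<integral>\<^sup>+x. f (c * x) \<partial>lborel)"
  unfolding nn_integral_def[of lborel f]
proof (rule SUP_least)
  fix g assume "g \<in> {g. simple_function lborel g \<and> g \<le> f}"
  then have g: "simple_function lborel g" "g \<le> f" by auto
  have gm: "g \<in> borel_measurable borel"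
    using borel_measurable_simple_function[OF g(1)] by (simp cong: measurable_cong_sets)
  have "integral\<^sup>S lborel g = (\<integral>\<^sup>+x. g x \<partial>lborel)" using nn_integral_eq_simple_integral[OF g(1)] by simp
  also have "\<dots> = ennreal \<bar>c\<bar> * (\<integral>\<^sup>+x. g (0 + c * x) \<partial>lborel)"
    using nn_integral_real_affine[OF gm c, of 0] by simp
  also have "\<dots> \<le> ennreal \<bar>c\<bar> * (\<integral>\<^sup>+x. f (c * x) \<partial>lborel)"
    using g(2) by (intro mult_left_mono nn_integral_mono) (auto simp: le_fun_def)
  finally show "integral\<^sup>S lborel g \<le> ennreal \<bar>c\<bar> * (\<integral>\<^sup>+x. f (c * x) \<partial>lborel)" .
qed

lemma nn_scale:
  fixes c :: real and f :: "real \<Rightarrow> ennreal"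
  assumes c: "c > 0"
  shows "(\<integral>\<^sup>+x. f (c * x) \<partial>lborel) = ennreal (1/c) * (\<integral>\<^sup>+x. f x \<partial>lborel)"
proof (rule antisym)
  have "(\<integral>\<^sup>+x. f (c * x) \<partial>lborel) \<le> ennreal \<bar>1/c\<bar> * (\<integral>\<^sup>+x. f (c * ((1/c) * x)) \<partial>lborel)"
    using nn_scale_le[of "1/c" "\<lambda>x. f (c * x)"] c by simp
  then show "(\<integral>\<^sup>+x. f (c * x) \<partial>lborel) \<le> ennreal (1/c) * (\<integral>\<^sup>+x. f x \<partial>lborel)"
    using c by simp
  have "ennreal (1/c) * (\<integral>\<^sup>+x. f x \<partial>lborel) \<le> ennreal (1/c) * (ennreal c * (\<integral>\<^sup>+x. f (c * x) \<partial>lborel))"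
    using nn_scale_le[of c f] c by (intro mult_left_mono) auto
  also have "\<dots> = (\<integral>\<^sup>+x. f (c * x) \<partial>lborel)"
    using c by (simp add: mult.assoc[symmetric] ennreal_mult[symmetric])
  finally show "ennreal (1/c) * (\<integral>\<^sup>+x. f x \<partial>lborel) \<le> (\<integral>\<^sup>+x. f (c * x) \<partial>lborel)" .
qed

lemma nn_cmult_ge:
  fixes f :: "real \<Rightarrow> ennreal"
  shows "a * (\<integral>\<^sup>+x. f x \<partial>lborel) \<le> (\<integral>\<^sup>+x. a * f x \<partial>lborel)"
  unfolding nn_integral_def[of lborel f] SUP_mult_left_ennreal
proof (rule SUP_least)
  fix g assume "g \<in> {g. simple_function lborel g \<and> g \<le> f}"
  then have g: "simple_function lborel g" "g \<le> f" by auto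
  have gm: "g \<in> borel_measurable lborel"
    using borel_measurable_simple_function[OF g(1)] by simp
  have "a * integral\<^sup>S lborel g = a * (\<integral>\<^sup>+x. g x \<partial>lborel)" using nn_integral_eq_simple_integral[OF g(1)] by simp
  also have "\<dots> = (\<integral>\<^sup>+x. a * g x \<partial>lborel)" using nn_integral_cmult[OF gm] by simp
  also have "\<dots> \<le> (\<integral>\<^sup>+x. a * f x \<partial>lborel)"
    using g(2) by (intro nn_integral_mono mult_left_mono) (auto simp: le_fun_def)
  finally show "a * integral\<^sup>S lborel g \<le> (\<integral>\<^sup>+x. a * f x \<partial>lborel)" .
qed

lemma nn_cmult:
  fixes f :: "real \<Rightarrow> ennreal" and b :: real
  assumes b: "b > 0"
  shows "(\<integral>\<^sup>+x. ennreal b * f x \<partial>lborel) = ennreal b * (\<integral>\<^sup>+x. f x \<partial>lborel)"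
proof (rule antisym)
  have "ennreal (1/b) * (\<integral>\<^sup>+x. ennreal b * f x \<partial>lborel) \<le> (\<integral>\<^sup>+x. ennreal (1/b) * (ennreal b * f x) \<partial>lborel)"
    by (rule nn_cmult_ge)
  also have "\<dots> = (\<integral>\<^sup>+x. f x \<partial>lborel)"
    using b by (simp add: mult.assoc[symmetric] ennreal_mult[symmetric])
  finally have "ennreal b * (ennreal (1/b) * (\<integral>\<^sup>+x. ennreal b * f x \<partial>lborel)) \<le> ennreal b * (\<integral>\<^sup>+x. f x \<partial>lborel)"
    by (intro mult_left_mono) auto
  then show "(\<integral>\<^sup>+x. ennreal b * f x \<partial>lborel) \<le> ennreal b * (\<integral>\<^sup>+x. f x \<partial>lborel)"
    using b by (simp add: mult.assoc[symmetric] ennreal_mult[symmetric])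
  show "ennreal b * (\<integral>\<^sup>+x. f x \<partial>lborel) \<le> (\<integral>\<^sup>+x. ennreal b * f x \<partial>lborel)" by (rule nn_cmult_ge)
qed

lemma AE_le_Inf:
  fixes g :: "real \<Rightarrow> ennreal"
  shows "AE x in lborel. g x \<le> Inf {c. AE x in lborel. g x \<le> c}"
proof -
  let ?S = "{c. AE x in lborel. g x \<le> c}"
  have "top \<in> ?S" by simp
  then obtain f :: "nat \<Rightarrow> ennreal" where f: "range f \<subseteq> ?S" "Inf ?S = (INF i. f i)"
    using ennreal_Inf_countable_INF[of ?S] by blast
  have "\<forall>i. AE x in lborel. g x \<le> f i" using f(1) by auto
  then have "AE x in lborel. \<forall>i. g x \<le> f i" by (simp add: AE_all_countable)
  then show ?thesis by eventually_elim (simp add: f(2) le_INF_iff)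
qed


lemma epow_cmult:
  assumes b: "b > 0"
  shows "epow (ennreal b * y) e = ennreal (b powr e) * epow y e"
proof (cases "y = top")
  case True
  then show ?thesis using b by (simp add: epow_def ennreal_mult_top)
next
  case False
  then have "ennreal b * y \<noteq> top" using b by (simp add: ennreal_mult_eq_top_iff)
  moreover have "enn2real (ennreal b * y) = b * enn2real y" using b by (simp add: enn2real_mult)
  ultimately show ?thesis using False b
    by (simp add: epow_def powr_mult ennreal_mult[symmetric])
qed

lemma rcp_fin:
  assumes "0 < p" "p \<noteq> top"
  shows "rcp p = 1 / enn2real p" "p = ennreal (enn2real p)" "enn2real p > 0"
proof -
  obtain P where P: "p = ennreal P" "P > 0" using assms
    by (metis ennreal_cases ennreal_less_zero_iff infinity_ennreal_def)
  then show "rcp p = 1 / enn2real p" "p = ennreal (enn2real p)" "enn2real p > 0"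
    by (auto simp: rcp_def inverse_ennreal divide_inverse)
qed

lemma rcp_top: "rcp top = 0" by (simp add: rcp_def)

lemma Lnorm_cmult:
  fixes g :: "real \<Rightarrow> ennreal"
  assumes p: "0 < p" and b: "b > 0"
  shows "Lnorm p (\<lambda>x. ennreal b * g x) = ennreal b * Lnorm p g"
proof (cases "p = top")
  case True
  let ?S = "{c. AE x in lborel. g x \<le> c}"
  let ?S' = "{c. AE x in lborel. ennreal b * g x \<le> c}"
  have "Inf ?S' \<le> ennreal b * Inf ?S"
  proof (rule Inf_lower, simp)
    show "AE x in lborel. ennreal b * g x \<le> ennreal b * Inf ?S"
      using AE_le_Inf[of g] by eventually_elim (rule mult_left_mono, auto)
  qed
  moreover have "Inf ?S \<le> ennreal (1/b) * Inf ?S'"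
  proof (rule Inf_lower, simp)
    show "AE x in lborel. g x \<le> ennreal (1/b) * Inf ?S'"
      using AE_le_Inf[of "\<lambda>x. ennreal b * g x"]
    proof eventually_elim
      case (elim x)
      then have "ennreal (1/b) * (ennreal b * g x) \<le> ennreal (1/b) * Inf ?S'"
        by (rule mult_left_mono) auto
      then show ?case using b by (simp add: mult.assoc[symmetric] ennreal_mult[symmetric])
    qed
  qed
  then have "ennreal b * Inf ?S \<le> ennreal b * (ennreal (1/b) * Inf ?S')"
    by (rule mult_left_mono) auto
  then have "ennreal b * Inf ?S \<le> Inf ?S'"
    using b by (simp add: mult.assoc[symmetric] ennreal_mult[symmetric])
  ultimately show ?thesis using True by (simp add: Lnorm_def)
next
  case False
  note F = rcp_fin[OF p False]
  let ?P = "enn2real p"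
  have "Lnorm p (\<lambda>x. ennreal b * g x) = epow (\<integral>\<^sup>+ x. ennreal (b powr ?P) * epow (g x) ?P \<partial>lborel) (1 / ?P)"
    using False b by (simp add: Lnorm_def epow_cmult)
  also have "\<dots> = epow (ennreal (b powr ?P) * (\<integral>\<^sup>+ x. epow (g x) ?P \<partial>lborel)) (1 / ?P)"
    using b by (simp add: nn_cmult)
  also have "\<dots> = ennreal ((b powr ?P) powr (1/?P)) * epow (\<integral>\<^sup>+ x. epow (g x) ?P \<partial>lborel) (1 / ?P)"
    using b by (simp add: epow_cmult)
  also have "(b powr ?P) powr (1/?P) = b" using F(3) b by (simp add: powr_powr)
  finally show ?thesis using False by (simp add: Lnorm_def)
qed

lemma Lnorm_scale:
  fixes g :: "real \<Rightarrow> ennreal"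
  assumes p: "0 < p" and c: "c > 0"
  shows "Lnorm p (\<lambda>x. g (c * x)) = ennreal (c powr (- rcp p)) * Lnorm p g"
proof (cases "p = top")
  case True
  have "\<And>d. (AE x in lborel. g (c * x) \<le> d) \<longleftrightarrow> (AE x in lborel. g x \<le> d)"
  proof
    fix d assume "AE x in lborel. g x \<le> d"
    then show "AE x in lborel. g (c * x) \<le> d" using AE_scale[of c "\<lambda>x. g x \<le> d"] c by simp
  next
    fix d assume "AE x in lborel. g (c * x) \<le> d"
    then have "AE x in lborel. g (c * ((1/c) * x)) \<le> d" using AE_scale[of "1/c" "\<lambda>x. g (c * x) \<le> d"] c by simp
    then show "AE x in lborel. g x \<le> d" using c by simp
  qed
  then show ?thesis using True c by (simp add: Lnorm_def rcp_top)
next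
  case False
  note F = rcp_fin[OF p False]
  let ?P = "enn2real p"
  have "Lnorm p (\<lambda>x. g (c * x)) = epow (ennreal (1/c) * (\<integral>\<^sup>+ x. epow (g x) ?P \<partial>lborel)) (1 / ?P)"
    using False c by (simp add: Lnorm_def nn_scale[of c "\<lambda>x. epow (g x) ?P"])
  also have "\<dots> = ennreal ((1/c) powr (1/?P)) * epow (\<integral>\<^sup>+ x. epow (g x) ?P \<partial>lborel) (1 / ?P)"
    using c by (simp add: epow_cmult)
  also have "(1/c) powr (1/?P) = c powr (- rcp p)" using F(1) c by (simp add: powr_minus_divide powr_divide)
  finally show ?thesis using False by (simp add: Lnorm_def)
qed

lemma Lq_scale:
  assumes q: "0 < q" and b: "b > 0" and c: "c > 0"
    and h: "\<And>x. norm (u x) = b * norm (v (c * x))"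
  shows "Lq q u = ennreal (b * c powr (- rcp q)) * Lq q v"
proof -
  have "Lq q u = Lnorm q (\<lambda>x. ennreal b * ennreal (norm (v (c * x))))"
    unfolding Lq_def h using b by (simp add: ennreal_mult)
  also have "\<dots> = ennreal b * (ennreal (c powr (- rcp q)) * Lq q v)"
    using Lnorm_cmult[OF q b] Lnorm_scale[OF q c, of "\<lambda>x. ennreal (norm (v x))"] by (simp add: Lq_def)
  finally show ?thesis using b by (simp add: ennreal_mult mult.assoc)
qed

lemma mixnorm_scale:
  assumes p: "0 < p" and r: "0 < r" and b: "b > 0" and c: "c > 0" and m: "m > 0"
    and h: "\<And>t x. norm (F t x) = b * norm (G (m * t) (c * x))"
  shows "mixnorm p r F = ennreal (b * m powr (- rcp r) * c powr (- rcp p)) * mixnorm p r G"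
proof -
  have inner: "Lnorm r (\<lambda>t. ennreal (norm (F t x))) = ennreal (b * m powr (- rcp r)) * Lnorm r (\<lambda>t. ennreal (norm (G t (c * x))))" for x
  proof -
    have "Lnorm r (\<lambda>t. ennreal (norm (F t x))) = Lnorm r (\<lambda>t. ennreal b * ennreal (norm (G (m * t) (c * x))))"
      unfolding h using b by (simp add: ennreal_mult)
    also have "\<dots> = ennreal b * (ennreal (m powr (- rcp r)) * Lnorm r (\<lambda>t. ennreal (norm (G t (c * x)))))"
      using Lnorm_cmult[OF r b] Lnorm_scale[OF r m, of "\<lambda>t. ennreal (norm (G t (c * x)))"] by simp
    finally show ?thesis using b by (simp add: ennreal_mult mult.assoc)
  qed
  have "mixnorm p r F = Lnorm p (\<lambda>x. ennreal (b * m powr (- rcp r)) * Lnorm r (\<lambda>t. ennreal (norm (G t (c * x)))))"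
    unfolding mixnorm_def inner ..
  also have "\<dots> = ennreal (b * m powr (- rcp r)) * (ennreal (c powr (- rcp p)) * mixnorm p r G)"
    using Lnorm_cmult[OF p, of "b * m powr (- rcp r)" "\<lambda>x. Lnorm r (\<lambda>t. ennreal (norm (G t (c * x))))"] b m
      Lnorm_scale[OF p c, of "\<lambda>x. Lnorm r (\<lambda>t. ennreal (norm (G t x)))"]
    by (simp add: mixnorm_def)
  finally show ?thesis using b by (simp add: ennreal_mult mult.assoc)
qed


lemma fourier_scale:
  assumes c: "c > 0"
  shows "fourier (\<lambda>y. u (y / c)) \<xi> = complex_of_real c * fourier u (c * \<xi>)"
proof -
  have "fourier (\<lambda>y. u (y / c)) \<xi> = \<bar>c\<bar> *\<^sub>R (LINT x|lborel. cis (- ((0 + c * x) * \<xi>)) * u ((0 + c * x) / c))"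
    unfolding fourier_def using c by (intro lborel_integral_real_affine[where f = "\<lambda>x. cis (- (x * \<xi>)) * u (x / c)" and t = 0]) simp
  also have "(LINT x|lborel. cis (- ((0 + c * x) * \<xi>)) * u ((0 + c * x) / c)) = fourier u (c * \<xi>)"
    unfolding fourier_def using c by (intro Bochner_Integration.integral_cong) (auto simp: ac_simps)
  finally show ?thesis using c by (simp add: scaleR_conv_of_real)
qed

lemma inv_fourier_scale:
  assumes c: "c > 0" and G: "\<And>\<xi>. G \<xi> = complex_of_real a * H (\<xi> / c)"
  shows "inv_fourier G x = complex_of_real (a * c) * inv_fourier H (c * x)"
proof -
  have "(LINT \<xi>|lborel. cis (x * \<xi>) * G \<xi>) = \<bar>c\<bar> *\<^sub>R (LINT \<eta>|lborel. cis (x * (0 + c * \<eta>)) * G (0 + c * \<eta>))"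
    using c by (intro lborel_integral_real_affine[where f = "\<lambda>\<xi>. cis (x * \<xi>) * G \<xi>" and t = 0]) simp
  also have "(LINT \<eta>|lborel. cis (x * (0 + c * \<eta>)) * G (0 + c * \<eta>)) = (LINT \<eta>|lborel. complex_of_real a * (cis ((c * x) * \<eta>) * H \<eta>))"
    using c by (intro Bochner_Integration.integral_cong) (auto simp: G ac_simps)
  also have "\<dots> = complex_of_real a * (LINT \<eta>|lborel. cis ((c * x) * \<eta>) * H \<eta>)" by simp
  finally show ?thesis using c unfolding inv_fourier_def by (simp add: scaleR_conv_of_real ac_simps)
qed

lemma boxsym_scale:
  "boxsym \<sigma> j k \<xi> = boxsym \<sigma> 0 k (\<xi> / 2 powr real_of_int j)"
  by (simp add: boxsym_def powr_minus_divide)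

lemma box_scale:
  fixes j :: int
  defines "c \<equiv> 2 powr real_of_int j"
  shows "box \<sigma> j k u x = box \<sigma> 0 k (\<lambda>y. u (y / c)) (c * x)"
proof -
  have c: "c > 0" unfolding c_def by simp
  have "box \<sigma> j k u x = complex_of_real ((1/c) * c) * box \<sigma> 0 k (\<lambda>y. u (y / c)) (c * x)"
    unfolding box_def
  proof (rule inv_fourier_scale[OF c])
    fix \<xi>
    show "complex_of_real (boxsym \<sigma> j k \<xi>) * fourier u \<xi> =
      complex_of_real (1 / c) * (complex_of_real (boxsym \<sigma> 0 k (\<xi> / c)) * fourier (\<lambda>y. u (y / c)) (\<xi> / c))"
      using c by (simp add: fourier_scale boxsym_scale[of \<sigma> j k \<xi>] c_def[symmetric])
  qed
  then show ?thesis using c by simp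
qed

lemma DboxW_scale:
  fixes j :: int
  defines "c \<equiv> 2 powr real_of_int j"
  assumes alpha: "\<alpha> > 0"
  shows "DboxW \<alpha> \<sigma> j k u t x = complex_of_real (c powr \<alpha>) * DboxW \<alpha> \<sigma> 0 k (\<lambda>y. u (y / c)) (c ^ 4 * t) (c * x)"
proof -
  have c: "c > 0" unfolding c_def by simp
  have "DboxW \<alpha> \<sigma> j k u t x = complex_of_real ((c powr \<alpha> / c) * c) * DboxW \<alpha> \<sigma> 0 k (\<lambda>y. u (y / c)) (c ^ 4 * t) (c * x)"
    unfolding DboxW_def
  proof (rule inv_fourier_scale[OF c])
    fix \<xi>
    have e1: "\<bar>\<xi> / c\<bar> powr \<alpha> = \<bar>\<xi>\<bar> powr \<alpha> / c powr \<alpha>" using c by (simp add: powr_divide)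
    have e2: "c ^ 4 * t * (\<xi> / c) ^ 4 = t * \<xi> ^ 4" using c by (simp add: field_simps)
    have e3: "c powr \<alpha> > 0" using c by simp
    show "complex_of_real (\<bar>\<xi>\<bar> powr \<alpha> * boxsym \<sigma> j k \<xi>) * cis (t * \<xi> ^ 4) * fourier u \<xi> =
      complex_of_real (c powr \<alpha> / c) * (complex_of_real (\<bar>\<xi> / c\<bar> powr \<alpha> * boxsym \<sigma> 0 k (\<xi> / c)) * cis (c ^ 4 * t * (\<xi> / c) ^ 4) *
       fourier (\<lambda>y. u (y / c)) (\<xi> / c))"
      unfolding e1 e2 using c e3 by (simp add: fourier_scale boxsym_scale[of \<sigma> j k \<xi>] c_def[symmetric] field_simps)
  qed
  then show ?thesis using c by simp
qed


lemma set_int_scale: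
  fixes F :: "real \<Rightarrow> complex"
  assumes m: "m > 0"
  shows "(LINT s:{a<..<b}|lborel. F s) = m *\<^sub>R (LINT s:{a/m<..<b/m}|lborel. F (m * s))"
proof -
  have "(LINT s:{a<..<b}|lborel. F s) = \<bar>m\<bar> *\<^sub>R (LINT s|lborel. indicator {a<..<b} (0 + m * s) *\<^sub>R F (0 + m * s))"
    unfolding set_lebesgue_integral_def using m
    by (intro lborel_integral_real_affine[where f = "\<lambda>s. indicator {a<..<b} s *\<^sub>R F s" and t = 0]) simp
  also have "(LINT s|lborel. indicator {a<..<b} (0 + m * s) *\<^sub>R F (0 + m * s)) = (LINT s:{a/m<..<b/m}|lborel. F (m * s))"
    unfolding set_lebesgue_integral_def using m
    by (intro Bochner_Integration.integral_cong) (auto simp: indicator_def field_simps)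
  finally show ?thesis using m by simp
qed

lemma interval_scale:
  fixes F :: "real \<Rightarrow> complex" and t m :: real
  assumes m: "m > 0"
  shows "(LBINT s=0..ereal (m*t). F s) = complex_of_real m * (LBINT s=0..ereal t. F (m * s))"
proof (cases "0 \<le> t")
  case True
  then have "0 \<le> m * t" using m by simp
  then show ?thesis using True m set_int_scale[OF m, where F=F and a=0 and b="m * t"]
    by (simp add: interval_lebesgue_integral_def scaleR_conv_of_real zero_ereal_def)
next
  case False
  then have "\<not> 0 \<le> m * t" using m by (simp add: zero_le_mult_iff)
  then show ?thesis using False m set_int_scale[OF m, where F=F and a="m * t" and b=0]
    by (simp add: interval_lebesgue_integral_def scaleR_conv_of_real zero_ereal_def)
qed

lemma DboxA_scale:
  fixes j :: int
  defines "c \<equiv> 2 powr real_of_int j"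
  assumes alpha: "\<alpha> > 0"
  shows "DboxA \<alpha> \<sigma> j k f t x = complex_of_real (c powr \<alpha> / c ^ 4) *
           DboxA \<alpha> \<sigma> 0 k (\<lambda>s y. f (s / c ^ 4) (y / c)) (c ^ 4 * t) (c * x)"
proof -
  have c: "c > 0" unfolding c_def by simp
  let ?g = "\<lambda>s y. f (s / c ^ 4) (y / c)"
  have "DboxA \<alpha> \<sigma> j k f t x = complex_of_real ((c powr \<alpha> / c ^ 5) * c) * DboxA \<alpha> \<sigma> 0 k ?g (c ^ 4 * t) (c * x)"
    unfolding DboxA_def
  proof (rule inv_fourier_scale[OF c])
    fix \<xi>
    have e1: "\<bar>\<xi> / c\<bar> powr \<alpha> = \<bar>\<xi>\<bar> powr \<alpha> / c powr \<alpha>" using c by (simp add: powr_divide)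
    have c4: "c ^ 4 > 0" using c by simp
    have inner: "(LBINT s=0..c ^ 4 * t. cis ((c ^ 4 * t - s) * (\<xi> / c) ^ 4) * fourier (?g s) (\<xi> / c))
       = complex_of_real (c ^ 4 * c) * (LBINT s=0..t. cis ((t - s) * \<xi> ^ 4) * fourier (f s) \<xi>)"
    proof -
      have "(LBINT s=0..c ^ 4 * t. cis ((c ^ 4 * t - s) * (\<xi> / c) ^ 4) * fourier (?g s) (\<xi> / c))
        = complex_of_real (c ^ 4) * (LBINT s=0..t. cis ((c ^ 4 * t - c ^ 4 * s) * (\<xi> / c) ^ 4) * fourier (?g (c ^ 4 * s)) (\<xi> / c))"
        by (rule interval_scale[OF c4, where F = "\<lambda>s. cis ((c ^ 4 * t - s) * (\<xi> / c) ^ 4) * fourier (?g s) (\<xi> / c)"])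
      also have "(\<lambda>s. cis ((c ^ 4 * t - c ^ 4 * s) * (\<xi> / c) ^ 4) * fourier (?g (c ^ 4 * s)) (\<xi> / c))
          = (\<lambda>s. complex_of_real c * (cis ((t - s) * \<xi> ^ 4) * fourier (f s) \<xi>))"
      proof
        fix s
        have "(c ^ 4 * t - c ^ 4 * s) * (\<xi> / c) ^ 4 = (t - s) * \<xi> ^ 4" using c by (simp add: field_simps)
        moreover have "?g (c ^ 4 * s) = (\<lambda>y. f s (y / c))" using c4 by simp
        ultimately show "cis ((c ^ 4 * t - c ^ 4 * s) * (\<xi> / c) ^ 4) * fourier (?g (c ^ 4 * s)) (\<xi> / c)
          = complex_of_real c * (cis ((t - s) * \<xi> ^ 4) * fourier (f s) \<xi>)"
          using c by (simp add: fourier_scale)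
      qed
      also have "(LBINT s=0..t. complex_of_real c * (cis ((t - s) * \<xi> ^ 4) * fourier (f s) \<xi>))
          = complex_of_real c * (LBINT s=0..t. cis ((t - s) * \<xi> ^ 4) * fourier (f s) \<xi>)"
        by (simp add: interval_lebesgue_integral_def set_lebesgue_integral_def)
      finally show ?thesis by simp
    qed
    have e3: "c powr \<alpha> > 0" using c by simp
    have e4: "complex_of_real c ^ 5 = complex_of_real c * complex_of_real c ^ 4"
      by (simp add: eval_nat_numeral)
    show "complex_of_real (\<bar>\<xi>\<bar> powr \<alpha> * boxsym \<sigma> j k \<xi>) * (LBINT s=0..t. cis ((t - s) * \<xi> ^ 4) * fourier (f s) \<xi>) =
      complex_of_real (c powr \<alpha> / c ^ 5) * (complex_of_real (\<bar>\<xi> / c\<bar> powr \<alpha> * boxsym \<sigma> 0 k (\<xi> / c)) *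
       (LBINT s=0..c ^ 4 * t. cis ((c ^ 4 * t - s) * (\<xi> / c) ^ 4) * fourier (?g s) (\<xi> / c)))"
      unfolding e1 inner using c e3 by (simp add: boxsym_scale[of \<sigma> j k \<xi>] c_def[symmetric] field_simps e4)
  qed
  moreover have "(c powr \<alpha> / c ^ 5) * c = c powr \<alpha> / c ^ 4" using c by (simp add: eval_nat_numeral)
  ultimately show ?thesis by (metis (no_types, lifting))
qed


lemma comp_deriv:
  fixes g :: "real \<Rightarrow> complex"
  assumes c: "c > 0" and d: "(g has_vector_derivative g') (at (x / c))"
  shows "((\<lambda>x. a *\<^sub>R g (x / c)) has_vector_derivative (a * (1/c)) *\<^sub>R g') (at x)"
proof -
  have "((\<lambda>x. x / c) has_vector_derivative (1/c)) (at x)"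
    unfolding has_real_derivative_iff_has_vector_derivative[symmetric]
    using c by (auto intro!: derivative_eq_intros)
  from vector_diff_chain_at[OF this d]
  have "((\<lambda>x. g (x / c)) has_vector_derivative (1/c) *\<^sub>R g') (at x)" by (simp add: o_def)
  from bounded_linear.has_vector_derivative[OF bounded_linear_scaleR_right this, of a]
  show ?thesis by simp
qed

lemma abs_scale_le:
  fixes c x :: real
  assumes c: "c > 0"
  shows "1 + \<bar>x\<bar> \<le> max 1 c * (1 + \<bar>x / c\<bar>)"
proof -
  have "\<bar>x\<bar> = c * \<bar>x / c\<bar>" using c by (simp add: abs_divide abs_of_pos)
  also have "\<dots> \<le> max 1 c * \<bar>x / c\<bar>" by (intro mult_right_mono) auto
  finally show ?thesis by (simp add: algebra_simps)
qed

lemma schwartz1_scale: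
  assumes u: "schwartz1 u" and c: "c > 0"
  shows "schwartz1 (\<lambda>y. u (y / c))"
proof -
  obtain D where D: "D 0 = u" "\<And>n x. (D n has_vector_derivative D (Suc n) x) (at x)"
    "\<And>m n. bounded (range (\<lambda>x. ((1 + \<bar>x\<bar>) ^ m) *\<^sub>R D n x))"
    using u unfolding schwartz1_def by blast
  define D' where "D' n x = ((1/c) ^ n) *\<^sub>R D n (x / c)" for n x
  have "D' 0 = (\<lambda>y. u (y / c))" using D(1) by (auto simp: D'_def)
  moreover have "(D' n has_vector_derivative D' (Suc n) x) (at x)" for n x
    using comp_deriv[OF c D(2)[of n "x / c"], of "(1/c)^n"] unfolding D'_def
    by (simp add: ac_simps)
  moreover have "bounded (range (\<lambda>x. ((1 + \<bar>x\<bar>) ^ m) *\<^sub>R D' n x))" for m n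
  proof -
    obtain B where B: "\<And>x. norm (((1 + \<bar>x\<bar>) ^ m) *\<^sub>R D n x) \<le> B"
      using D(3)[of m n] unfolding bounded_iff by auto
    let ?M = "max 1 c"
    have "norm (((1 + \<bar>x\<bar>) ^ m) *\<^sub>R D' n x) \<le> ?M ^ m * (1/c) ^ n * B" for x
    proof -
      have "norm (((1 + \<bar>x\<bar>) ^ m) *\<^sub>R D' n x) = (1/c) ^ n * ((1 + \<bar>x\<bar>) ^ m * norm (D n (x / c)))"
        using c by (simp add: D'_def)
      also have "\<dots> \<le> (1/c) ^ n * ((?M * (1 + \<bar>x / c\<bar>)) ^ m * norm (D n (x / c)))"
        using abs_scale_le[OF c, of x] c
        by (intro mult_left_mono mult_right_mono power_mono) auto
      also have "\<dots> = ?M ^ m * (1/c) ^ n * norm (((1 + \<bar>x / c\<bar>) ^ m) *\<^sub>R D n (x / c))"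
        by (simp add: power_mult_distrib)
      also have "\<dots> \<le> ?M ^ m * (1/c) ^ n * B"
        using B[of "x / c"] c by (intro mult_left_mono) auto
      finally show ?thesis .
    qed
    then show ?thesis unfolding bounded_iff by auto
  qed
  ultimately show ?thesis unfolding schwartz1_def by blast
qed

lemma abs_scale_le2:
  fixes c m t x :: real
  assumes c: "c > 0" and m: "m > 0"
  shows "1 + \<bar>t\<bar> + \<bar>x\<bar> \<le> max 1 (max m c) * (1 + \<bar>t / m\<bar> + \<bar>x / c\<bar>)"
proof -
  have "\<bar>x\<bar> = c * \<bar>x / c\<bar>" using c by (simp add: abs_divide abs_of_pos)
  also have "\<dots> \<le> max 1 (max m c) * \<bar>x / c\<bar>" by (intro mult_right_mono) auto
  finally have 1: "\<bar>x\<bar> \<le> max 1 (max m c) * \<bar>x / c\<bar>" .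
  have "\<bar>t\<bar> = m * \<bar>t / m\<bar>" using m by (simp add: abs_divide abs_of_pos)
  also have "\<dots> \<le> max 1 (max m c) * \<bar>t / m\<bar>" by (intro mult_right_mono) auto
  finally have 2: "\<bar>t\<bar> \<le> max 1 (max m c) * \<bar>t / m\<bar>" .
  have 3: "1 \<le> max 1 (max m c)" by simp
  have "max 1 (max m c) * (1 + \<bar>t / m\<bar> + \<bar>x / c\<bar>) = max 1 (max m c) + max 1 (max m c) * \<bar>t / m\<bar> + max 1 (max m c) * \<bar>x / c\<bar>"
    by (simp add: distrib_left)
  then show ?thesis using 1 2 3 by linarith
qed

lemma schwartz2_scale:
  assumes f: "schwartz2 f" and c: "c > 0" and m: "m > 0"
  shows "schwartz2 (\<lambda>s y. f (s / m) (y / c))"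
proof -
  obtain D where D: "D 0 0 = f"
    "\<And>a b t x. ((\<lambda>s. D a b s x) has_vector_derivative D (Suc a) b t x) (at t)"
    "\<And>a b t x. ((\<lambda>y. D a b t y) has_vector_derivative D a (Suc b) t x) (at x)"
    "\<And>k a b. bounded (range (\<lambda>(t, x). ((1 + \<bar>t\<bar> + \<bar>x\<bar>) ^ k) *\<^sub>R D a b t x))"
    using f unfolding schwartz2_def by blast
  define D' where "D' a b t x = ((1/m) ^ a * (1/c) ^ b) *\<^sub>R D a b (t / m) (x / c)" for a b t x
  have "D' 0 0 = (\<lambda>s y. f (s / m) (y / c))" using D(1) by (auto simp: D'_def fun_eq_iff)
  moreover have "((\<lambda>s. D' a b s x) has_vector_derivative D' (Suc a) b t x) (at t)" for a b t x
    using comp_deriv[OF m D(2)[of a b "x / c" "t / m"], of "(1/m) ^ a * (1/c) ^ b"] unfolding D'_def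
    by (simp add: ac_simps)
  moreover have "((\<lambda>y. D' a b t y) has_vector_derivative D' a (Suc b) t x) (at x)" for a b t x
    using comp_deriv[OF c D(3)[of a b "t / m" "x / c"], of "(1/m) ^ a * (1/c) ^ b"] unfolding D'_def
    by (simp add: ac_simps)
  moreover have "bounded (range (\<lambda>(t, x). ((1 + \<bar>t\<bar> + \<bar>x\<bar>) ^ k) *\<^sub>R D' a b t x))" for k a b
  proof -
    obtain B where B: "\<And>t x. norm (((1 + \<bar>t\<bar> + \<bar>x\<bar>) ^ k) *\<^sub>R D a b t x) \<le> B"
      using D(4)[of k a b] unfolding bounded_iff by fastforce
    let ?M = "max 1 (max m c)"
    let ?K = "(1/m) ^ a * (1/c) ^ b"
    have K: "?K \<ge> 0" using c m by simp
    have "norm (((1 + \<bar>t\<bar> + \<bar>x\<bar>) ^ k) *\<^sub>R D' a b t x) \<le> ?M ^ k * ?K * B" for t x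
    proof -
      have "norm (((1 + \<bar>t\<bar> + \<bar>x\<bar>) ^ k) *\<^sub>R D' a b t x) = ?K * ((1 + \<bar>t\<bar> + \<bar>x\<bar>) ^ k * norm (D a b (t / m) (x / c)))"
        using c m by (simp add: D'_def)
      also have "\<dots> \<le> ?K * ((?M * (1 + \<bar>t / m\<bar> + \<bar>x / c\<bar>)) ^ k * norm (D a b (t / m) (x / c)))"
        using abs_scale_le2[OF c m, of t x] K
        by (intro mult_left_mono mult_right_mono power_mono) auto
      also have "\<dots> = ?M ^ k * ?K * norm (((1 + \<bar>t / m\<bar> + \<bar>x / c\<bar>) ^ k) *\<^sub>R D a b (t / m) (x / c))"
        by (simp add: power_mult_distrib)
      also have "\<dots> \<le> ?M ^ k * ?K * B"
        using B[of "t / m" "x / c"] K by (intro mult_left_mono) auto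
      finally show ?thesis .
    qed
    then show ?thesis unfolding bounded_iff by auto
  qed
  ultimately show ?thesis unfolding schwartz2_def by blast
qed


lemma ennreal_solve:
  assumes X: "X > 0" and h: "A = ennreal X * B"
  shows "B = ennreal (1 / X) * A"
  using X by (simp add: h mult.assoc[symmetric] ennreal_mult[symmetric])

lemma pow2_facts:
  fixes j :: int
  shows "(2 powr real_of_int j) powr a = 2 powr (real_of_int j * a)"
    and "(2 powr real_of_int j) ^ 4 = 2 powr (4 * real_of_int j)"
    and "((2 powr real_of_int j) ^ 4) powr a = 2 powr (4 * real_of_int j * a)"
    and "(2::real) powr a * 2 powr b = 2 powr (a + b)"
    and "(2::real) powr a / 2 powr b = 2 powr (a - b)"
    and "1 / (2::real) powr a = 2 powr (- a)"
proof -
  show 1: "(2 powr real_of_int j) powr a = 2 powr (real_of_int j * a)" by (simp add: powr_powr)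
  show 2: "(2 powr real_of_int j) ^ 4 = 2 powr (4 * real_of_int j)"
    by (subst powr_power) auto
  show "((2 powr real_of_int j) ^ 4) powr a = 2 powr (4 * real_of_int j * a)" unfolding 2 by (simp add: powr_powr)
  show "(2::real) powr a * 2 powr b = 2 powr (a + b)" by (simp add: powr_add)
  show "(2::real) powr a / 2 powr b = 2 powr (a - b)" by (simp add: powr_diff)
  show "1 / (2::real) powr a = 2 powr (- a)" by (simp add: powr_minus_divide)
qed

theorem lemma4p5:
  fixes p r p1 r1 q :: ennreal and \<alpha> :: real and \<sigma> :: "real \<Rightarrow> real"
  assumes exps: "0 < p" "0 < r" "0 < p1" "0 < r1" "0 < q"
    and alpha: "0 < \<alpha>"
    and sigma_smooth: "\<exists>S::nat \<Rightarrow> real \<Rightarrow> real. S 0 = \<sigma> \<and>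
                         (\<forall>n x. (S n has_real_derivative S (Suc n) x) (at x))"
    and sigma_supp: "\<And>\<xi>. \<bar>\<xi>\<bar> > 3/4 \<Longrightarrow> \<sigma> \<xi> = 0"
    and sigma_pu: "\<And>\<xi>. ((\<lambda>k::int. \<sigma> (\<xi> - real_of_int k)) has_sum 1) UNIV"
    and hypW: "\<exists>C::real. \<forall>(k::int) u. schwartz1 u \<longrightarrow>
                 mixnorm p r (DboxW \<alpha> \<sigma> 0 k u) \<le> ennreal C * Lq q (box \<sigma> 0 k u)"
    and hypA: "\<exists>C::real. \<forall>(k::int) f. schwartz2 f \<longrightarrow>
                 mixnorm p r (DboxA \<alpha> \<sigma> 0 k f) \<le> ennreal C * mixnorm p1 r1 (\<lambda>t. box \<sigma> 0 k (f t))"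
  shows "(\<exists>C::real. \<forall>(j::int) (k::int) u. schwartz1 u \<longrightarrow>
            mixnorm p r (DboxW \<alpha> \<sigma> j k u)
              \<le> ennreal C * ennreal (2 powr (real_of_int j * (\<alpha> - 4 * rcp r - rcp p + rcp q)))
                 * Lq q (box \<sigma> j k u))
       \<and> (\<exists>C::real. \<forall>(j::int) (k::int) f. schwartz2 f \<longrightarrow>
            mixnorm p r (DboxA \<alpha> \<sigma> j k f)
              \<le> ennreal C * ennreal (2 powr (real_of_int j * (\<alpha> - 4 - 4 * rcp r - rcp p + 4 * rcp r1 + rcp p1)))
                 * mixnorm p1 r1 (\<lambda>t. box \<sigma> j k (f t)))"
proof
  obtain C where C: "\<And>k u. schwartz1 u \<Longrightarrow> mixnorm p r (DboxW \<alpha> \<sigma> 0 k u) \<le> ennreal C * Lq q (box \<sigma> 0 k u)"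
    using hypW by blast
  show "\<exists>C::real. \<forall>(j::int) (k::int) u. schwartz1 u \<longrightarrow>
            mixnorm p r (DboxW \<alpha> \<sigma> j k u)
              \<le> ennreal C * ennreal (2 powr (real_of_int j * (\<alpha> - 4 * rcp r - rcp p + rcp q)))
                 * Lq q (box \<sigma> j k u)"
  proof (intro exI allI impI)
    fix j k :: int and u assume u: "schwartz1 u"
    define c where "c = 2 powr real_of_int j"
    have c: "c > 0" unfolding c_def by simp
    define v where "v = (\<lambda>y. u (y / c))"
    have v: "schwartz1 v" unfolding v_def by (rule schwartz1_scale[OF u c])
    let ?K = "c powr \<alpha> * (c ^ 4) powr (- rcp r) * c powr (- rcp p)"
    have eq1: "mixnorm p r (DboxW \<alpha> \<sigma> j k u) = ennreal ?K * mixnorm p r (DboxW \<alpha> \<sigma> 0 k v)"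
    proof (rule mixnorm_scale[OF exps(1,2)])
      show "c powr \<alpha> > 0" "c > 0" "c ^ 4 > 0" using c by auto
      fix t x
      show "norm (DboxW \<alpha> \<sigma> j k u t x) = c powr \<alpha> * norm (DboxW \<alpha> \<sigma> 0 k v (c ^ 4 * t) (c * x))"
        unfolding DboxW_scale[where j=j and \<sigma>=\<sigma> and k=k and u=u and t=t and x=x, OF alpha] c_def[symmetric] v_def
        by (simp add: norm_mult)
    qed
    have eq2: "Lq q (box \<sigma> j k u) = ennreal (1 * c powr (- rcp q)) * Lq q (box \<sigma> 0 k v)"
    proof (rule Lq_scale[OF exps(5) _ c])
      show "(1::real) > 0" by simp
      fix x
      show "norm (box \<sigma> j k u x) = 1 * norm (box \<sigma> 0 k v (c * x))"
        unfolding box_scale[where j=j and \<sigma>=\<sigma> and k=k and u=u and x=x] c_def[symmetric] v_def by simp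
    qed
    have eq3: "Lq q (box \<sigma> 0 k v) = ennreal (c powr rcp q) * Lq q (box \<sigma> j k u)"
      using ennreal_solve[OF _ eq2] c by (simp add: powr_minus_divide)
    have "mixnorm p r (DboxW \<alpha> \<sigma> j k u) \<le> ennreal ?K * (ennreal C * Lq q (box \<sigma> 0 k v))"
      unfolding eq1 using C[OF v] by (rule mult_left_mono) simp
    also have "\<dots> = ennreal C * (ennreal ?K * ennreal (c powr rcp q)) * Lq q (box \<sigma> j k u)"
      unfolding eq3 by (simp add: ac_simps)
    also have "ennreal ?K * ennreal (c powr rcp q) = ennreal (?K * c powr rcp q)"
      using c by (simp add: ennreal_mult)
    also have "?K * c powr rcp q = 2 powr (real_of_int j * (\<alpha> - 4 * rcp r - rcp p + rcp q))"
      unfolding c_def pow2_facts(2) powr_powr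
      by (simp add: powr_add[symmetric] powr_diff[symmetric] powr_minus_divide[symmetric] algebra_simps)
    finally show "mixnorm p r (DboxW \<alpha> \<sigma> j k u)
              \<le> ennreal C * ennreal (2 powr (real_of_int j * (\<alpha> - 4 * rcp r - rcp p + rcp q)))
                 * Lq q (box \<sigma> j k u)" .
  qed
next
  obtain C where C: "\<And>k f. schwartz2 f \<Longrightarrow> mixnorm p r (DboxA \<alpha> \<sigma> 0 k f) \<le> ennreal C * mixnorm p1 r1 (\<lambda>t. box \<sigma> 0 k (f t))"
    using hypA by blast
  show "\<exists>C::real. \<forall>(j::int) (k::int) f. schwartz2 f \<longrightarrow>
            mixnorm p r (DboxA \<alpha> \<sigma> j k f)
              \<le> ennreal C * ennreal (2 powr (real_of_int j * (\<alpha> - 4 - 4 * rcp r - rcp p + 4 * rcp r1 + rcp p1)))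
                 * mixnorm p1 r1 (\<lambda>t. box \<sigma> j k (f t))"
  proof (intro exI allI impI)
    fix j k :: int and f assume f: "schwartz2 f"
    define c where "c = 2 powr real_of_int j"
    have c: "c > 0" unfolding c_def by simp
    have c4: "c ^ 4 > 0" using c by simp
    define g where "g = (\<lambda>s y. f (s / c ^ 4) (y / c))"
    have g: "schwartz2 g" unfolding g_def by (rule schwartz2_scale[OF f c c4])
    let ?K = "c powr \<alpha> / c ^ 4 * (c ^ 4) powr (- rcp r) * c powr (- rcp p)"
    let ?L = "1 * (c ^ 4) powr (- rcp r1) * c powr (- rcp p1)"
    have eq1: "mixnorm p r (DboxA \<alpha> \<sigma> j k f) = ennreal ?K * mixnorm p r (DboxA \<alpha> \<sigma> 0 k g)"
    proof (rule mixnorm_scale[OF exps(1,2)])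
      show "c powr \<alpha> / c ^ 4 > 0" "c > 0" "c ^ 4 > 0" using c by auto
      fix t x
      show "norm (DboxA \<alpha> \<sigma> j k f t x) = c powr \<alpha> / c ^ 4 * norm (DboxA \<alpha> \<sigma> 0 k g (c ^ 4 * t) (c * x))"
        unfolding DboxA_scale[where j=j and \<sigma>=\<sigma> and k=k and f=f and t=t and x=x, OF alpha] c_def[symmetric] g_def
        using c by (simp add: norm_mult norm_divide norm_power)
    qed
    have eq2: "mixnorm p1 r1 (\<lambda>t. box \<sigma> j k (f t)) = ennreal ?L * mixnorm p1 r1 (\<lambda>t. box \<sigma> 0 k (g t))"
    proof (rule mixnorm_scale[OF exps(3,4)])
      show "(1::real) > 0" "c > 0" "c ^ 4 > 0" using c by auto
      fix t x
      show "norm (box \<sigma> j k (f t) x) = 1 * norm (box \<sigma> 0 k (g (c ^ 4 * t)) (c * x))"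
        unfolding box_scale[where j=j and \<sigma>=\<sigma> and k=k and u="f t" and x=x] c_def[symmetric] g_def using c4 by simp
    qed
    have Lpos: "?L > 0" using c by simp
    have eq3: "mixnorm p1 r1 (\<lambda>t. box \<sigma> 0 k (g t)) = ennreal (1 / ?L) * mixnorm p1 r1 (\<lambda>t. box \<sigma> j k (f t))"
      by (rule ennreal_solve[OF Lpos eq2])
    have "mixnorm p r (DboxA \<alpha> \<sigma> j k f) \<le> ennreal ?K * (ennreal C * mixnorm p1 r1 (\<lambda>t. box \<sigma> 0 k (g t)))"
      unfolding eq1 using C[OF g] by (rule mult_left_mono) simp
    also have "\<dots> = ennreal C * (ennreal ?K * ennreal (1 / ?L)) * mixnorm p1 r1 (\<lambda>t. box \<sigma> j k (f t))"
      unfolding eq3 by (simp add: ac_simps)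
    also have "ennreal ?K * ennreal (1 / ?L) = ennreal (?K * (1 / ?L))"
      using c by (intro ennreal_mult[symmetric]) auto
    also have "?K * (1 / ?L) = 2 powr (real_of_int j * (\<alpha> - 4 - 4 * rcp r - rcp p + 4 * rcp r1 + rcp p1))"
      unfolding c_def pow2_facts(2) powr_powr
      by (simp add: powr_add[symmetric] powr_diff[symmetric] powr_minus_divide[symmetric] algebra_simps)
    finally show "mixnorm p r (DboxA \<alpha> \<sigma> j k f)
              \<le> ennreal C * ennreal (2 powr (real_of_int j * (\<alpha> - 4 - 4 * rcp r - rcp p + 4 * rcp r1 + rcp p1)))
                 * mixnorm p1 r1 (\<lambda>t. box \<sigma> j k (f t))" .
  qed
qed

end
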